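(* Let $A_1,\ldots,A_k$ and $B_1,\ldots,B_k$ be $n\times n$ Hermitian matrices with $mI\le A_i,B_i\le MI$ for $i=1,\ldots,k$ and some scalars $0<m<M$, and let $\Phi_1,\ldots,\Phi_k:\mathscr{M}_n\to\mathscr{M}_r$ be positive linear maps with $\sum_{i=1}^k\Phi_i(I)=I$. Then $$\left(\sum_{i=1}^k\Phi_i(A_i^2)\right)^{1/2}+\left(\sum_{i=1}^k\Phi_i(B_i^2)\right)^{1/2}\le\frac{M+m}{2\sqrt{Mm}}\left(\sum_{i=1}^k\Phi_i((A_i+B_i)^2)\right)^{1/2}$$ and $$\left(\sum_{i=1}^k\Phi_i(A_i^2)\right)^{1/2}+\left(\sum_{i=1}^k\Phi_i(B_i^2)\right)^{1/2}\le\frac{(M-m)^2}{2(M+m)}I+\left(\sum_{i=1}^k\Phi_i((A_i+B_i)^2)\right)^{1/2}.$$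
   Context: $\mathscr{M}_n$ denotes the algebra of $n\times n$ complex matrices; $\le$ is the Löwner order. A linear map is positive if it maps positive semidefinite matrices to positive semidefinite matrices. *)

theory Defs
  imports "HOL-Analysis.Analysis"
begin

type_synonym 'n cmat = "complex^'n^'n"

definition adjoint_mat :: "complex^'n^'m \<Rightarrow> complex^'m^'n" where
  "adjoint_mat A = (\<chi> i j. cnj (A $ j $ i))"

definition hermitian :: "('n::finite) cmat \<Rightarrow> bool" where
  "hermitian A \<longleftrightarrow> adjoint_mat A = A"

definition qform :: "('n::finite) cmat \<Rightarrow> complex^'n \<Rightarrow> complex" where
  "qform A x = (\<Sum>i\<in>UNIV. cnj (x $ i) * (A *v x) $ i)"

definition psd :: "('n::finite) cmat \<Rightarrow> bool" where
  "psd A \<longleftrightarrow> (\<forall>x. Im (qform A x) = 0 \<and> Re (qform A x) \<ge> 0)"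

definition loewner_le :: "('n::finite) cmat \<Rightarrow> 'n cmat \<Rightarrow> bool" (infix "\<le>\<^sub>L" 50) where
  "A \<le>\<^sub>L B \<longleftrightarrow> psd (B - A)"

definition cmat_scale :: "complex \<Rightarrow> complex^'n^'m \<Rightarrow> complex^'n^'m" (infixr "*\<^sub>M" 75) where
  "c *\<^sub>M A = (\<chi> i j. c * A $ i $ j)"

definition msqrt :: "('n::finite) cmat \<Rightarrow> 'n cmat" where
  "msqrt X = (THE S. psd S \<and> S ** S = X)"

definition clinear_map :: "(('n::finite) cmat \<Rightarrow> ('r::finite) cmat) \<Rightarrow> bool" where
  "clinear_map \<Phi> \<longleftrightarrow> (\<forall>X Y. \<Phi> (X + Y) = \<Phi> X + \<Phi> Y) \<and> (\<forall>c X. \<Phi> (c *\<^sub>M X) = c *\<^sub>M \<Phi> X)"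

definition positive_map :: "(('n::finite) cmat \<Rightarrow> ('r::finite) cmat) \<Rightarrow> bool" where
  "positive_map \<Phi> \<longleftrightarrow> (\<forall>X. psd X \<longrightarrow> psd (\<Phi> X))"

end

theory Submission
  imports Defs
begin

definition hip :: "complex^'n::finite \<Rightarrow> complex^'n \<Rightarrow> complex" where
  "hip x y = (\<Sum>i\<in>UNIV. cnj (x$i) * y$i)"

definition outer :: "complex^'n::finite \<Rightarrow> complex^'n \<Rightarrow> complex^'n^'n" where
  "outer u v = (\<chi> i j. u$i * cnj (v$j))"

lemma qform_hip: "qform A x = hip x (A *v x)"
  by (simp add: qform_def hip_def)

lemma hip_add_left: "hip (x + y) z = hip x z + hip y z"
  by (simp add: hip_def distrib_right sum.distrib)
lemma hip_add_right: "hip z (x + y) = hip z x + hip z y"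
  by (simp add: hip_def distrib_left sum.distrib)
lemma hip_diff_left: "hip (x - y) z = hip x z - hip y z"
  by (simp add: hip_def left_diff_distrib sum_subtractf)
lemma hip_diff_right: "hip z (x - y) = hip z x - hip z y"
  by (simp add: hip_def right_diff_distrib sum_subtractf)
lemma hip_smult_left: "hip (c *s x) y = cnj c * hip x y"
  by (simp add: hip_def sum_distrib_left mult.assoc)
lemma hip_smult_right: "hip x (c *s y) = c * hip x y"
  by (simp add: hip_def sum_distrib_left mult.left_commute)
lemma hip_zero_left[simp]: "hip 0 x = 0" by (simp add: hip_def)
lemma hip_zero_right[simp]: "hip x 0 = 0" by (simp add: hip_def)
lemma hip_neg_left: "hip (- x) y = - hip x y" by (simp add: hip_def sum_negf)
lemma hip_neg_right: "hip x (- y) = - hip x y" by (simp add: hip_def sum_negf)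

lemma hip_sum_right: "hip x (sum f S) = (\<Sum>j\<in>S. hip x (f j))"
  by (induction S rule: infinite_finite_induct) (auto simp: hip_add_right)
lemma hip_sum_left: "hip (sum f S) x = (\<Sum>j\<in>S. hip (f j) x)"
  by (induction S rule: infinite_finite_induct) (auto simp: hip_add_left)

lemma hip_cnj: "cnj (hip x y) = hip y x"
  by (simp add: hip_def mult.commute)

lemma hip_self: "hip x x = complex_of_real ((norm x)^2)"
proof -
  have "(norm x)^2 = (\<Sum>i\<in>UNIV. x$i \<bullet> x$i)"
    by (simp add: power2_norm_eq_inner inner_vec_def)
  moreover have "\<And>i. cnj (x$i) * x$i = complex_of_real (x$i \<bullet> x$i)"
    by (simp add: inner_complex_def complex_eq_iff)
  ultimately show ?thesis by (simp add: hip_def)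
qed

lemma inner_hip: "x \<bullet> y = Re (hip x y)"
  by (simp add: hip_def inner_vec_def inner_complex_def Re_sum)

lemma hip_mv: "hip x (A *v y) = hip (adjoint_mat A *v x) y"
proof -
  have "hip x (A *v y) = (\<Sum>i\<in>UNIV. \<Sum>j\<in>UNIV. cnj (x$i) * (A$i$j * y$j))"
    by (simp add: hip_def matrix_vector_mult_def sum_distrib_left)
  also have "\<dots> = (\<Sum>j\<in>UNIV. \<Sum>i\<in>UNIV. cnj (x$i) * (A$i$j * y$j))"
    by (rule sum.swap)
  also have "\<dots> = hip (adjoint_mat A *v x) y"
    by (simp add: hip_def matrix_vector_mult_def adjoint_mat_def sum_distrib_right sum_distrib_left mult_ac)
  finally show ?thesis .
qed

lemma herm_hip: "hermitian A \<Longrightarrow> hip x (A *v y) = hip (A *v x) y"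
  by (simp add: hermitian_def hip_mv)

lemma herm_qform_real: "hermitian A \<Longrightarrow> Im (qform A x) = 0"
proof -
  assume h: "hermitian A"
  have "cnj (qform A x) = qform A x"
    by (simp add: qform_hip hip_cnj herm_hip[OF h])
  from arg_cong[OF this, of Im] show ?thesis by simp
qed

lemma mv_smult: "(A::complex^'n^'m) *v (c *s x) = c *s (A *v x)"
  unfolding vec_eq_iff matrix_vector_mult_def
  by (simp add: vec_eq_iff matrix_vector_mult_def sum_distrib_left mult.assoc mult.commute mult.left_commute)

lemma hip_zero_all: assumes "\<And>x y. hip x (K *v y) = 0" shows "K = 0"
proof -
  have "K *v y = 0" for y
  proof -
    have "hip (K *v y) (K *v y) = 0" using assms by simp
    then show ?thesis by (simp add: hip_self)
  qed
  then show ?thesis by (simp add: matrix_eq)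
qed

lemma qform_zero_all: assumes "\<And>x. qform K x = 0" shows "K = 0"
proof (rule hip_zero_all)
  fix x y
  have e1: "hip x (K *v y) + hip y (K *v x) = 0"
    using assms[of "x + y"] assms[of x] assms[of y]
    by (simp add: qform_hip hip_add_left hip_add_right matrix_vector_right_distrib add.commute)
  have e2: "hip (\<i> *s x) (K *v y) + hip y (K *v (\<i> *s x)) = 0"
    using assms[of "\<i> *s x + y"] assms[of "\<i> *s x"] assms[of y]
    by (simp add: qform_hip hip_add_left hip_add_right matrix_vector_right_distrib add.commute)
  then have "- \<i> * hip x (K *v y) + \<i> * hip y (K *v x) = 0"
    by (simp add: hip_smult_left hip_smult_right mv_smult)
  then have "\<i> * (hip y (K *v x) - hip x (K *v y)) = 0" by (simp add: right_diff_distrib)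
  then have "hip y (K *v x) = hip x (K *v y)" by simp
  with e1 have "2 * hip x (K *v y) = 0" by (simp only: mult_2)
  then show "hip x (K *v y) = 0" by simp
qed

lemma adjoint_adjoint[simp]: "adjoint_mat (adjoint_mat A) = A"
  by (simp add: adjoint_mat_def vec_eq_iff)

lemma cmat_scale_mv: "(c *\<^sub>M A) *v x = c *s (A *v (x::complex^'n))"
  by (simp add: cmat_scale_def vec_eq_iff matrix_vector_mult_def sum_distrib_left mult.assoc)

lemma mat_mv: "mat c *v x = c *s (x::complex^'n::finite)"
  by (simp add: mat_def matrix_vector_mult_def vec_eq_iff if_distrib if_distribR cong del: if_weak_cong)

lemma sum_mv: "(sum f S) *v (x::complex^'n) = (\<Sum>j\<in>S. f j *v x)"
  by (induction S rule: infinite_finite_induct) (auto simp: matrix_vector_mult_add_rdistrib)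

lemma qform_add: "qform (A + B) x = qform A x + qform B x"
  by (simp add: qform_hip matrix_vector_mult_add_rdistrib hip_add_right)
lemma qform_diff: "qform (A - B) x = qform A x - qform B x"
  by (simp add: qform_hip matrix_vector_mult_diff_rdistrib hip_diff_right)
lemma qform_scale: "qform (c *\<^sub>M A) x = c * qform A x"
  by (simp add: qform_hip cmat_scale_mv hip_smult_right)
lemma qform_mat: "qform (mat c) x = c * hip x x"
  by (simp add: qform_hip mat_mv hip_smult_right)
lemma qform_sum: "qform (sum f S) x = (\<Sum>j\<in>S. qform (f j) x)"
  by (simp add: qform_hip sum_mv hip_sum_right)
lemma qform_mult: "qform (A ** B) x = hip x (A *v (B *v x))"
  by (simp add: qform_hip matrix_vector_mul_assoc)

lemma herm_of_real: assumes "\<And>x. Im (qform A x) = 0" shows "hermitian A"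
proof -
  have "qform (A - adjoint_mat A) x = 0" for x
  proof -
    have "qform (adjoint_mat A) x = hip (A *v x) x"
      by (simp add: qform_hip hip_mv)
    also have "\<dots> = cnj (qform A x)" by (simp add: qform_hip hip_cnj)
    also have "\<dots> = qform A x" using assms[of x] by (simp add: complex_eq_iff)
    finally show ?thesis by (simp add: qform_diff)
  qed
  then have "A - adjoint_mat A = 0" by (rule qform_zero_all)
  then show ?thesis by (simp add: hermitian_def)
qed

lemma psd_herm: "psd A \<Longrightarrow> hermitian A"
  by (rule herm_of_real) (simp add: psd_def)

lemma psd_iff_re: "hermitian A \<Longrightarrow> psd A \<longleftrightarrow> (\<forall>x. 0 \<le> Re (qform A x))"
  by (simp add: psd_def herm_qform_real)

lemma psd_add: "psd A \<Longrightarrow> psd B \<Longrightarrow> psd (A + B)"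
  by (simp add: psd_def qform_add)

lemma psd_sum: "(\<And>j. j \<in> S \<Longrightarrow> psd (f j)) \<Longrightarrow> psd (sum f S)"
proof (induction S rule: infinite_finite_induct)
  case (infinite S) then show ?case by (simp add: psd_def qform_hip)
next
  case empty then show ?case by (simp add: psd_def qform_hip)
next
  case (insert x F) then show ?case by (simp add: psd_add)
qed

lemma psd_scale: "0 \<le> c \<Longrightarrow> psd A \<Longrightarrow> psd (complex_of_real c *\<^sub>M A)"
  by (simp add: psd_def qform_scale)

lemma loewner_trans: "A \<le>\<^sub>L B \<Longrightarrow> B \<le>\<^sub>L C \<Longrightarrow> A \<le>\<^sub>L C"
  unfolding loewner_le_def
proof -
  assume "psd (B - A)" "psd (C - B)"
  then have "psd ((C - B) + (B - A))" by (rule psd_add[rotated])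
  then show "psd (C - A)" by simp
qed

lemma loewner_add: "A \<le>\<^sub>L B \<Longrightarrow> C \<le>\<^sub>L D \<Longrightarrow> A + C \<le>\<^sub>L B + D"
  unfolding loewner_le_def
proof -
  assume "psd (B - A)" "psd (D - C)"
  then have "psd ((B - A) + (D - C))" by (rule psd_add)
  then show "psd (B + D - (A + C))" by (simp add: algebra_simps)
qed

lemma loewner_antisym: "A \<le>\<^sub>L B \<Longrightarrow> B \<le>\<^sub>L A \<Longrightarrow> A = B"
proof -
  assume a: "A \<le>\<^sub>L B" "B \<le>\<^sub>L A"
  have "qform (B - A) x = 0" for x
  proof -
    have "0 \<le> Re (qform (B - A) x)" "0 \<le> Re (qform (A - B) x)" "Im (qform (B - A) x) = 0"
      using a by (auto simp: loewner_le_def psd_def)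
    then show ?thesis by (simp add: qform_diff complex_eq_iff)
  qed
  then have "B - A = 0" by (rule qform_zero_all)
  then show ?thesis by simp
qed

lemma loewner_scale: "0 \<le> c \<Longrightarrow> A \<le>\<^sub>L B \<Longrightarrow>
   complex_of_real c *\<^sub>M A \<le>\<^sub>L complex_of_real c *\<^sub>M B"
proof -
  assume "0 \<le> c" "A \<le>\<^sub>L B"
  then have "psd (complex_of_real c *\<^sub>M (B - A))" by (simp add: psd_scale loewner_le_def)
  moreover have "complex_of_real c *\<^sub>M (B - A) = complex_of_real c *\<^sub>M B - complex_of_real c *\<^sub>M A"
    by (simp add: cmat_scale_def vec_eq_iff algebra_simps)
  ultimately show ?thesis by (simp add: loewner_le_def)
qed

lemma psd_square: "hermitian K \<Longrightarrow> psd (K ** K)"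
  by (simp add: psd_def qform_mult herm_hip hip_self)

lemma herm_mv_eigen:
  "hermitian H \<Longrightarrow> hip u (H *v x) = hip (H *v u) x" by (rule herm_hip)

lemma real_quad_aux:
  fixes n r :: real
  assumes n: "0 \<le> n" and all: "\<And>t. 0 \<le> t^2 * r - 2 * t * n"
  shows "n = 0"
proof (cases "r \<le> 0")
  case True
  with all[of 1] n show ?thesis by simp
next
  case False
  have "0 \<le> (n/r)^2 * r - 2 * (n/r) * n" by (rule all)
  also have "\<dots> = - (n^2 / r)" using False by (simp add: power2_eq_square field_simps)
  finally have "n^2 / r \<le> 0" by simp
  with False have "n^2 \<le> 0" by (simp add: divide_le_0_iff)
  with n show ?thesis by simp
qed

lemma L0:
  fixes G :: "complex^'n::finite^'n"
  assumes h: "hermitian G" and q0: "qform G v = 0"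
    and all: "\<And>t::real. 0 \<le> Re (qform G (v - complex_of_real t *s (G *v v)))"
  shows "G *v v = 0"
proof -
  define z where "z = G *v v"
  have a1: "hip v (G *v z) = hip z z" by (simp add: herm_hip[OF h] z_def)
  have a2: "hip v z = 0" using q0 by (simp add: qform_hip z_def)
  have eq: "qform G (v - complex_of_real t *s z) =
      (complex_of_real t)^2 * qform G z - 2 * complex_of_real t * hip z z" for t
    by (simp add: qform_hip matrix_vector_mult_diff_distrib mv_smult hip_diff_left hip_diff_right
        hip_smult_left hip_smult_right a1 a2 algebra_simps power2_eq_square flip: z_def)
  have "0 \<le> t^2 * Re (qform G z) - 2 * t * (norm z)^2" for t
    using all[of t] unfolding eq z_def[symmetric] by (simp add: hip_self power2_eq_square)
  then have "(norm z)^2 = 0" by (intro real_quad_aux) auto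
  then show ?thesis by (simp add: z_def)
qed

lemma cont_hip: "continuous_on S (\<lambda>v. hip u v)"
  unfolding hip_def by (intro continuous_intros)

lemma cont_qform: "continuous_on S (\<lambda>v. qform H v)"
  unfolding qform_def matrix_vector_mult_def
  by (intro continuous_intros)

lemma qform_smult_real: "qform H (complex_of_real c *s w) = complex_of_real (c^2) * qform H w"
  by (simp add: qform_hip mv_smult hip_smult_left hip_smult_right power2_eq_square)

lemma smult_of_real: "complex_of_real c *s (x::complex^'n) = c *\<^sub>R x"
  by (auto simp: vec_eq_iff scaleR_conv_of_real[where 'a=complex])

lemma variational:
  fixes H :: "complex^'n::finite^'n"
  assumes herm: "hermitian H" and fin: "finite U"
    and eig: "\<And>u. u \<in> U \<Longrightarrow> \<exists>l::real. H *v u = complex_of_real l *s u"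
    and nz: "x \<noteq> 0" and xo: "\<And>u. u \<in> U \<Longrightarrow> hip u x = 0"
  shows "\<exists>v \<mu>. norm v = 1 \<and> (\<forall>u\<in>U. hip u v = 0) \<and> H *v v = complex_of_real \<mu> *s v \<and>
     (\<forall>w. (\<forall>u\<in>U. hip u w = 0) \<longrightarrow> \<mu> * (norm w)^2 \<le> Re (qform H w))"
proof -
  define K where "K = {v. \<forall>u\<in>U. hip u v = 0} \<inter> sphere 0 1"
  have cl: "closed {v::complex^'n. \<forall>u\<in>U. hip u v = 0}"
  proof -
    have "{v::complex^'n. \<forall>u\<in>U. hip u v = 0} = (\<Inter>u\<in>U. {v. hip u v = 0})" by auto
    moreover have "closed {v::complex^'n. hip u v = 0}" for u
      by (rule closed_Collect_eq) (auto intro: cont_hip)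
    ultimately show ?thesis by auto
  qed
  have compK: "compact K" unfolding K_def using cl by (intro closed_Int_compact) auto
  define x1 where "x1 = complex_of_real (1 / norm x) *s x"
  have nx1: "norm x1 = 1"
    unfolding x1_def smult_of_real using nz by simp
  have "x1 \<in> K" using nx1 xo by (simp add: K_def x1_def hip_smult_right)
  then have neK: "K \<noteq> {}" by auto
  have contK: "continuous_on K (\<lambda>v. Re (qform H v))"
    by (intro continuous_intros cont_qform)
  obtain v0 where v0K: "v0 \<in> K" and v0min: "\<And>y. y \<in> K \<Longrightarrow> Re (qform H v0) \<le> Re (qform H y)"
    using continuous_attains_inf[OF compK neK contK] by auto
  define \<mu> where "\<mu> = Re (qform H v0)"
  have nv0: "norm v0 = 1" and v0o: "\<And>u. u\<in>U \<Longrightarrow> hip u v0 = 0" using v0K by (auto simp: K_def)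
  have bound: "\<mu> * (norm w)^2 \<le> Re (qform H w)" if wo: "\<forall>u\<in>U. hip u w = 0" for w
  proof (cases "w = 0")
    case True then show ?thesis by (simp add: qform_hip)
  next
    case False
    define w1 where "w1 = complex_of_real (1 / norm w) *s w"
    have "norm w1 = 1"
      unfolding w1_def smult_of_real using False by simp
    then have "w1 \<in> K" using wo by (simp add: K_def w1_def hip_smult_right)
    then have "\<mu> \<le> Re (qform H w1)" using v0min by (simp add: \<mu>_def)
    also have "\<dots> = Re (qform H w) / (norm w)^2"
      unfolding w1_def qform_smult_real by (simp add: power_divide)
    finally show ?thesis using False by (simp add: field_simps)
  qed
  define G where "G = H - mat (complex_of_real \<mu>)"
  have qG: "qform G y = qform H y - complex_of_real \<mu> * hip y y" for y
    by (simp add: G_def qform_diff qform_mat)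
  have hG: "hermitian G"
    by (rule herm_of_real) (simp add: qG herm_qform_real[OF herm] hip_self)
  have "qform G v0 = 0"
  proof -
    have "qform H v0 = complex_of_real \<mu>"
      using herm_qform_real[OF herm, of v0] by (simp add: \<mu>_def complex_eq_iff)
    then show ?thesis by (simp add: qG hip_self nv0)
  qed
  moreover have zo: "hip u (G *v v0) = 0" if uU: "u \<in> U" for u
  proof -
    obtain l where l: "H *v u = complex_of_real l *s u" using eig[OF uU] by auto
    have "hip u (G *v v0) = hip (G *v u) v0" by (rule herm_hip[OF hG])
    also have "G *v u = complex_of_real (l - \<mu>) *s u"
      by (simp add: G_def matrix_vector_mult_diff_rdistrib mat_mv l vec_eq_iff algebra_simps)
    finally show ?thesis by (simp add: hip_smult_left hip_diff_left v0o[OF uU])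
  qed
  moreover have "0 \<le> Re (qform G (v0 - complex_of_real t *s (G *v v0)))" for t
  proof -
    let ?w = "v0 - complex_of_real t *s (G *v v0)"
    have "\<forall>u\<in>U. hip u ?w = 0" by (simp add: hip_diff_right hip_smult_right zo v0o)
    from bound[OF this] show ?thesis by (simp add: qG hip_self)
  qed
  ultimately have "G *v v0 = 0" by (intro L0[OF hG]) auto
  then have "H *v v0 = complex_of_real \<mu> *s v0"
    by (simp add: G_def matrix_vector_mult_diff_rdistrib mat_mv)
  with nv0 v0o bound show ?thesis by blast
qed

definition ortho_eig :: "complex^'n::finite^'n \<Rightarrow> (complex^'n) set \<Rightarrow> bool" where
  "ortho_eig H U \<longleftrightarrow> finite U \<and> (\<forall>u\<in>U. \<forall>w\<in>U. hip u w = (if u = w then 1 else 0)) \<and>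
     (\<forall>u\<in>U. \<exists>l::real. H *v u = complex_of_real l *s u)"

lemma ortho_card: fixes H :: "complex^'n::finite^'n"
  assumes "ortho_eig H U" shows "card U \<le> DIM(complex^'n)"
proof -
  have "pairwise orthogonal U"
    using assms by (auto simp: pairwise_def orthogonal_def inner_hip ortho_eig_def)
  moreover have "0 \<notin> U"
  proof
    assume z: "0 \<in> U"
    from assms have "\<forall>u\<in>U. \<forall>w\<in>U. hip u w = (if u = w then 1 else 0)" by (simp add: ortho_eig_def)
    from bspec[OF bspec[OF this z] z] show False by simp
  qed
  ultimately have "independent U" by (rule pairwise_orthogonal_independent)
  from independent_bound[OF this] show ?thesis by (rule conjunct2)
qed

lemma hip_expand: assumes "ortho_eig H U" "w \<in> U"
  shows "hip w (\<Sum>u\<in>U. c u *s u) = c w"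
proof -
  have "hip w (\<Sum>u\<in>U. c u *s u) = (\<Sum>u\<in>U. c u * (if w = u then 1 else 0))"
    using assms by (simp add: hip_sum_right hip_smult_right ortho_eig_def)
  also have "\<dots> = (\<Sum>u\<in>U. if w = u then c u else 0)" by (rule sum.cong) auto
  also have "\<dots> = c w" using assms by (simp add: ortho_eig_def)
  finally show ?thesis .
qed

definition compl :: "(complex^'n::finite) set \<Rightarrow> bool" where
  "compl U \<longleftrightarrow> (\<forall>x. x = (\<Sum>u\<in>U. hip u x *s u))"

lemma spectral:
  fixes H :: "complex^'n::finite^'n"
  assumes herm: "hermitian H"
  shows "\<exists>U. ortho_eig H U \<and> compl U"
proof -
  define S where "S = card ` {U. ortho_eig H U}"
  have "ortho_eig H {}" by (simp add: ortho_eig_def)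
  then have neS: "S \<noteq> {}" by (auto simp: S_def)
  have "S \<subseteq> {..DIM(complex^'n)}"
  proof
    fix c assume "c \<in> S"
    then obtain V where "ortho_eig H V" "c = card V" by (auto simp: S_def)
    then show "c \<in> {..DIM(complex^'n)}" using ortho_card[of H V] by simp
  qed
  then have finS: "finite S" by (rule finite_subset) simp
  define N where "N = Max S"
  have "N \<in> S" using finS neS by (simp add: N_def)
  then obtain U where oU: "ortho_eig H U" and cU: "card U = N" by (auto simp: S_def)
  have complete: "\<forall>x. x = (\<Sum>u\<in>U. hip u x *s u)"
  proof (intro allI, rule ccontr)
    fix x
    define z where "z = x - (\<Sum>u\<in>U. hip u x *s u)"
    assume "x \<noteq> (\<Sum>u\<in>U. hip u x *s u)"
    then have nz: "z \<noteq> 0" by (simp add: z_def)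
    have zo: "hip u z = 0" if "u \<in> U" for u
      using hip_expand[OF oU that, of "\<lambda>u. hip u x"] by (simp add: z_def hip_diff_right)
    have finU: "finite U" and eigU: "\<And>u. u \<in> U \<Longrightarrow> \<exists>l::real. H *v u = complex_of_real l *s u"
      using oU by (auto simp: ortho_eig_def)
    obtain v \<mu> where nv: "norm v = 1" and vo: "\<forall>u\<in>U. hip u v = 0"
      and ev: "H *v v = complex_of_real \<mu> *s v"
      using variational[OF herm finU eigU nz zo] by blast
    have hvv: "hip v v = 1" using nv by (simp add: hip_self)
    have vU: "v \<notin> U" using vo hvv by auto
    have vo2: "hip v u = 0" if "u \<in> U" for u
      using vo that hip_cnj[of u v] by simp
    have "ortho_eig H (insert v U)"
      unfolding ortho_eig_def
    proof (intro conjI ballI)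
      show "finite (insert v U)" using finU by simp
    next
      fix u w assume uI: "u \<in> insert v U" and wI: "w \<in> insert v U"
      have oUU: "\<And>u w. u \<in> U \<Longrightarrow> w \<in> U \<Longrightarrow> hip u w = (if u = w then 1 else 0)"
        using oU unfolding ortho_eig_def by blast
      show "hip u w = (if u = w then 1 else 0)"
      proof (cases "u = v")
        case True
        then show ?thesis
        proof (cases "w = v")
          case True then show ?thesis using \<open>u = v\<close> hvv by simp
        next
          case False then have "w \<in> U" using wI by simp
          then show ?thesis using \<open>u = v\<close> vo2 False by simp
        qed
      next
        case False then have uU: "u \<in> U" using uI by simp
        show ?thesis
        proof (cases "w = v")
          case True then show ?thesis using uU vo vU by auto
        next
          case False then have "w \<in> U" using wI by simp
          then show ?thesis using uU oUU by simp
        qed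
      qed
    next
      fix u assume "u \<in> insert v U"
      then show "\<exists>l::real. H *v u = complex_of_real l *s u" using eigU ev by auto
    qed
    then have "card (insert v U) \<in> S" by (auto simp: S_def)
    then have "card (insert v U) \<le> N" using finS by (simp add: N_def)
    moreover have "card (insert v U) = N + 1" using vU finU cU by simp
    ultimately show False by simp
  qed
  show ?thesis by (rule exI[of _ U], rule conjI[OF oU complete[folded compl_def]])
qed

definition Dm :: "(complex^'n::finite) set \<Rightarrow> (complex^'n \<Rightarrow> real) \<Rightarrow> complex^'n^'n" where
  "Dm U f = (\<Sum>u\<in>U. complex_of_real (f u) *\<^sub>M outer u u)"

lemma outer_mv: "outer u u *v x = hip u x *s u"
  by (simp add: vec_eq_iff matrix_vector_mult_def outer_def hip_def sum_distrib_left sum_distrib_right mult_ac)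

lemma mv_sum: "(A::complex^'n^'m) *v sum f S = (\<Sum>j\<in>S. A *v f j)"
  by (induction S rule: infinite_finite_induct) (auto simp: matrix_vector_right_distrib)

lemma Dm_mv: "Dm U f *v x = (\<Sum>u\<in>U. (complex_of_real (f u) * hip u x) *s u)"
  by (simp add: Dm_def sum_mv cmat_scale_mv outer_mv vector_smult_assoc)

lemma Dm_hip: "ortho_eig H U \<Longrightarrow> w \<in> U \<Longrightarrow> hip w (Dm U f *v x) = complex_of_real (f w) * hip w x"
  unfolding Dm_mv by (rule hip_expand)

lemma Dm_qform: "qform (Dm U f) x = (\<Sum>u\<in>U. complex_of_real (f u * (cmod (hip u x))^2))"
proof -
  have "qform (Dm U f) x = (\<Sum>u\<in>U. complex_of_real (f u) * hip u x * hip x u)"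
    by (simp add: qform_hip Dm_mv hip_sum_right hip_smult_right)
  also have "\<dots> = (\<Sum>u\<in>U. complex_of_real (f u * (cmod (hip u x))^2))"
  proof (rule sum.cong)
    fix u
    have "hip u x * hip x u = complex_of_real ((cmod (hip u x))^2)"
      using complex_norm_square[of "hip u x"] by (simp add: hip_cnj[symmetric, of u x])
    then show "complex_of_real (f u) * hip u x * hip x u = complex_of_real (f u * (cmod (hip u x))^2)"
      by (simp add: mult.assoc)
  qed simp
  finally show ?thesis .
qed

lemma Dm_psd: "(\<And>u. u \<in> U \<Longrightarrow> 0 \<le> f u) \<Longrightarrow> psd (Dm U f)"
  unfolding psd_def Dm_qform
  by (auto simp: Re_sum Im_sum intro!: sum_nonneg)

lemma Dm_mult: assumes "ortho_eig H U"
  shows "Dm U f ** Dm U g = Dm U (\<lambda>u. f u * g u)"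
proof -
  have "Dm U f *v (Dm U g *v x) = Dm U (\<lambda>u. f u * g u) *v x" for x
  proof -
    have "Dm U f *v (Dm U g *v x) = (\<Sum>u\<in>U. (complex_of_real (f u) * hip u (Dm U g *v x)) *s u)"
      by (rule Dm_mv)
    also have "\<dots> = (\<Sum>u\<in>U. (complex_of_real (f u * g u) * hip u x) *s u)"
      by (rule sum.cong) (simp_all add: Dm_hip[OF assms] mult.assoc)
    finally show ?thesis by (simp add: Dm_mv)
  qed
  then show ?thesis by (simp add: matrix_eq matrix_vector_mul_assoc)
qed

definition ev :: "complex^'n::finite^'n \<Rightarrow> complex^'n \<Rightarrow> real" where
  "ev H u = Re (qform H u)"

lemma ortho_eig_ev: assumes "ortho_eig H U" "u \<in> U"
  shows "H *v u = complex_of_real (ev H u) *s u"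
proof -
  obtain l where l: "H *v u = complex_of_real l *s u" using assms unfolding ortho_eig_def by blast
  have "hip u u = 1" using assms by (auto simp: ortho_eig_def)
  then have "ev H u = l" by (simp add: ev_def qform_hip l hip_smult_right)
  with l show ?thesis by simp
qed

lemma spectral2:
  fixes H :: "complex^'n::finite^'n"
  assumes "hermitian H"
  shows "\<exists>U. ortho_eig H U \<and> mat 1 = Dm U (\<lambda>_. 1) \<and> H = Dm U (ev H)"
proof -
  obtain U where oU: "ortho_eig H U" and cU0: "compl U"
    using spectral[OF assms] by blast
  have cU: "x = (\<Sum>u\<in>U. hip u x *s u)" for x
    using cU0 unfolding compl_def by (rule spec)
  have "mat 1 *v x = Dm U (\<lambda>_. 1) *v x" for x
  proof -
    have "Dm U (\<lambda>_. 1) *v x = (\<Sum>u\<in>U. hip u x *s u)" by (simp add: Dm_mv)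
    also have "\<dots> = x" by (rule cU[symmetric])
    finally show ?thesis by simp
  qed
  then have e1: "mat 1 = Dm U (\<lambda>_. 1)" by (simp add: matrix_eq)
  have "H *v x = Dm U (ev H) *v x" for x
  proof -
    have "H *v x = H *v (\<Sum>u\<in>U. hip u x *s u)" by (rule arg_cong[OF cU])
    also have "\<dots> = (\<Sum>u\<in>U. hip u x *s (H *v u))" by (simp add: mv_sum mv_smult)
    also have "\<dots> = (\<Sum>u\<in>U. (complex_of_real (ev H u) * hip u x) *s u)"
      by (rule sum.cong) (simp_all add: ortho_eig_ev[OF oU] vector_smult_assoc mult.commute)
    finally show ?thesis by (simp add: Dm_mv)
  qed
  then have "H = Dm U (ev H)" by (simp add: matrix_eq)
  show ?thesis by (rule exI[of _ U]) (intro conjI oU e1 \<open>H = Dm U (ev H)\<close>)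
qed

lemma ev_qform: assumes "ortho_eig H U" "u \<in> U" shows "qform H u = complex_of_real (ev H u)"
proof -
  have "hip u u = 1" using assms by (auto simp: ortho_eig_def)
  then show ?thesis by (simp add: qform_hip ortho_eig_ev[OF assms] hip_smult_right)
qed

lemma sqrt_exists: assumes "psd X" shows "\<exists>S. psd S \<and> S ** S = X"
proof -
  obtain U where oU: "ortho_eig X U" and eX: "X = Dm U (ev X)"
    using spectral2[OF psd_herm[OF assms]] by blast
  have nn: "0 \<le> ev X u" if "u \<in> U" for u
    using assms by (simp add: ev_def psd_def)
  let ?S = "Dm U (\<lambda>u. sqrt (ev X u))"
  have "psd ?S" by (rule Dm_psd) (simp add: nn)
  moreover have "?S ** ?S = X"
  proof -
    have "?S ** ?S = Dm U (\<lambda>u. sqrt (ev X u) * sqrt (ev X u))" by (rule Dm_mult[OF oU])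
    also have "\<dots> = Dm U (ev X)" unfolding Dm_def by (rule sum.cong) (simp_all add: nn)
    finally show ?thesis using eX by simp
  qed
  ultimately show ?thesis by blast
qed

lemma herm_diff: "hermitian A \<Longrightarrow> hermitian B \<Longrightarrow> hermitian (A - B)"
  by (rule herm_of_real) (simp add: qform_diff herm_qform_real)

lemma herm_add: "hermitian A \<Longrightarrow> hermitian B \<Longrightarrow> hermitian (A + B)"
  by (rule herm_of_real) (simp add: qform_add herm_qform_real)

lemma real_contra_aux:
  fixes l s :: real
  assumes "l < 0" "0 \<le> s" "0 \<le> s + l" "0 \<le> 2 * l * s + l^2"
  shows False
proof -
  have "0 \<le> l * (2 * s + l)" using assms(4) by (simp add: power2_eq_square algebra_simps)
  then have "2 * s + l \<le> 0" using assms(1) by (simp add: mult_le_0_iff zero_le_mult_iff)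
  with assms(2,3) have "s = 0" by linarith
  with assms(1,3) show False by simp
qed

lemma sq_mono:
  fixes S Y :: "complex^'n::finite^'n"
  assumes pS: "psd S" and pY: "psd Y" and le: "S ** S \<le>\<^sub>L Y ** Y"
  shows "S \<le>\<^sub>L Y"
proof (rule ccontr)
  assume np: "\<not> S \<le>\<^sub>L Y"
  define D where "D = Y - S"
  have hS: "hermitian S" and hY: "hermitian Y" using pS pY by (auto simp: psd_herm)
  have hD: "hermitian D" unfolding D_def by (rule herm_diff[OF hY hS])
  obtain U where oU: "ortho_eig D U" and eD: "D = Dm U (ev D)"
    using spectral2[OF hD] by blast
  have "\<exists>u\<in>U. ev D u < 0"
  proof (rule ccontr)
    assume "\<not> (\<exists>u\<in>U. ev D u < 0)"
    then have "psd (Dm U (ev D))" by (intro Dm_psd) (simp add: not_less)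
    with eD np show False by (simp add: loewner_le_def D_def)
  qed
  then obtain u where uU: "u \<in> U" and neg: "ev D u < 0" by blast
  define l where "l = ev D u"
  have huu: "hip u u = 1" using oU uU by (auto simp: ortho_eig_def)
  have Du: "D *v u = complex_of_real l *s u" unfolding l_def by (rule ortho_eig_ev[OF oU uU])
  have Yu: "Y *v u = S *v u + complex_of_real l *s u"
    using Du by (simp add: D_def matrix_vector_mult_diff_rdistrib algebra_simps)
  define s where "s = Re (qform S u)"
  have qS: "qform S u = complex_of_real s"
    using herm_qform_real[OF hS, of u] by (simp add: s_def complex_eq_iff)
  have qS': "hip (S *v u) u = complex_of_real s"
    using qS by (simp add: qform_hip herm_hip[OF hS, symmetric])
  have s0: "0 \<le> s" using pS by (simp add: s_def psd_def)
  have "qform Y u = complex_of_real (s + l)"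
    using qS by (simp add: qform_hip Yu hip_add_right hip_smult_right huu)
  then have c1: "0 \<le> s + l" using pY unfolding psd_def by (metis Re_complex_of_real)
  have "qform (Y ** Y - S ** S) u = hip (Y *v u) (Y *v u) - hip (S *v u) (S *v u)"
    by (simp add: qform_diff qform_mult herm_hip[OF hY] herm_hip[OF hS])
  also have "\<dots> = complex_of_real (2 * l * s + l^2)"
    using qS qS' by (simp add: Yu hip_add_right hip_add_left hip_smult_right hip_smult_left huu
        qform_hip algebra_simps power2_eq_square)
  finally have "0 \<le> 2 * l * s + l^2" using le unfolding loewner_le_def psd_def
    by (metis Re_complex_of_real)
  from real_contra_aux[OF neg[folded l_def] s0 c1 this] show False .
qed

lemma loewner_refl: "A \<le>\<^sub>L A"
  by (simp add: loewner_le_def psd_def qform_hip)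

lemma sqrt_unique: "psd S \<Longrightarrow> psd T \<Longrightarrow> S ** S = T ** T \<Longrightarrow> S = T"
  by (metis loewner_antisym loewner_refl sq_mono)

lemma msqrt_char: assumes "psd X" shows "psd (msqrt X) \<and> msqrt X ** msqrt X = X"
proof -
  have "\<exists>!S. psd S \<and> S ** S = X"
    using sqrt_exists[OF assms] sqrt_unique by blast
  then show ?thesis unfolding msqrt_def by (rule theI')
qed

lemma sqrt_le: assumes "psd X" "psd Y" "X \<le>\<^sub>L Y ** Y" shows "msqrt X \<le>\<^sub>L Y"
  using msqrt_char[OF assms(1)] assms(2,3) sq_mono by metis

lemma qform_ext: "(\<And>x. qform A x = qform B x) \<Longrightarrow> A = B"
  using qform_zero_all[of "A - B"] by (simp add: qform_diff)

lemma psd_Q_real: "psd Q \<Longrightarrow> qform Q x = complex_of_real (Re (qform Q x))"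
  by (simp add: psd_def complex_eq_iff)

lemma qform_expand:
  "qform Q (complex_of_real l *s x - y) = complex_of_real (l^2) * qform Q x
     - complex_of_real l * hip x (Q *v y) - complex_of_real l * hip y (Q *v x) + hip y (Q *v y)"
  by (simp add: qform_hip matrix_vector_mult_diff_distrib mv_smult hip_diff_left hip_diff_right
      hip_smult_left hip_smult_right algebra_simps power2_eq_square)

lemma G0:
  fixes Q :: "'j \<Rightarrow> complex^'r::finite^'r" and l :: "'j \<Rightarrow> real"
  assumes fin: "finite J" and pQ: "\<And>j. j \<in> J \<Longrightarrow> psd (Q j)" and sQ: "(\<Sum>j\<in>J. Q j) = mat 1"
  defines "a \<equiv> (\<Sum>j\<in>J. complex_of_real (l j) *\<^sub>M Q j)"
    and "p \<equiv> (\<Sum>j\<in>J. complex_of_real ((l j)^2) *\<^sub>M Q j)"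
  shows "hermitian a" and "psd p" and "psd (p - a ** a)"
    and "(\<And>j. j \<in> J \<Longrightarrow> 0 \<le> l j) \<Longrightarrow> psd a"
    and "(\<And>j. j \<in> J \<Longrightarrow> m \<le> l j \<and> l j \<le> M) \<Longrightarrow>
          psd (complex_of_real (M + m) *\<^sub>M a - mat (complex_of_real (M * m)) - p)"
proof -
  have qa: "qform a x = (\<Sum>j\<in>J. complex_of_real (l j) * qform (Q j) x)" for x
    by (simp add: a_def qform_sum qform_scale)
  have qp: "qform p x = (\<Sum>j\<in>J. complex_of_real ((l j)^2) * qform (Q j) x)" for x
    by (simp add: p_def qform_sum qform_scale)
  have qI: "hip x x = (\<Sum>j\<in>J. qform (Q j) x)" for x
    using qform_mat[of 1 x] by (simp add: sQ[symmetric] qform_sum)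
  show ha: "hermitian a"
    by (rule herm_of_real) (simp add: qa Im_sum psd_herm[OF pQ] herm_qform_real)
  show "psd p" unfolding p_def by (intro psd_sum psd_scale pQ) auto
  show "(\<And>j. j \<in> J \<Longrightarrow> 0 \<le> l j) \<Longrightarrow> psd a" unfolding a_def by (intro psd_sum psd_scale pQ) auto
  show "psd (complex_of_real (M + m) *\<^sub>M a - mat (complex_of_real (M * m)) - p)"
    if bd: "\<And>j. j \<in> J \<Longrightarrow> m \<le> l j \<and> l j \<le> M"
  proof -
    have "complex_of_real (M + m) *\<^sub>M a - mat (complex_of_real (M * m)) - p
        = (\<Sum>j\<in>J. complex_of_real ((M + m) * l j - M * m - (l j)^2) *\<^sub>M Q j)"
    proof (rule qform_ext)
      fix x
      show "qform (complex_of_real (M + m) *\<^sub>M a - mat (complex_of_real (M * m)) - p) x =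
            qform (\<Sum>j\<in>J. complex_of_real ((M + m) * l j - M * m - (l j)^2) *\<^sub>M Q j) x"
      proof -
        let ?q = "\<lambda>j. qform (Q j) x"
        have "qform (complex_of_real (M + m) *\<^sub>M a - mat (complex_of_real (M * m)) - p) x =
          complex_of_real (M + m) * (\<Sum>j\<in>J. complex_of_real (l j) * ?q j)
          - complex_of_real (M * m) * (\<Sum>j\<in>J. ?q j) - (\<Sum>j\<in>J. complex_of_real ((l j)^2) * ?q j)"
          by (simp only: qform_diff qform_scale qform_mat qa qp qI)
        also have "\<dots> = (\<Sum>j\<in>J. complex_of_real (M + m) * (complex_of_real (l j) * ?q j))
          - (\<Sum>j\<in>J. complex_of_real (M * m) * ?q j) - (\<Sum>j\<in>J. complex_of_real ((l j)^2) * ?q j)"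
          by (simp only: sum_distrib_left)
        also have "\<dots> = (\<Sum>j\<in>J. complex_of_real (M + m) * (complex_of_real (l j) * ?q j)
          - complex_of_real (M * m) * ?q j - complex_of_real ((l j)^2) * ?q j)"
          by (simp only: sum_subtractf)
        also have "\<dots> = (\<Sum>j\<in>J. complex_of_real ((M + m) * l j - M * m - (l j)^2) * ?q j)"
          by (rule sum.cong) (simp_all add: algebra_simps)
        also have "\<dots> = qform (\<Sum>j\<in>J. complex_of_real ((M + m) * l j - M * m - (l j)^2) *\<^sub>M Q j) x"
          by (simp only: qform_sum qform_scale)
        finally show ?thesis .
      qed
    qed
    moreover have nn: "0 \<le> (M + m) * l j - M * m - (l j)^2" if "j \<in> J" for j
    proof -
      have "0 \<le> (M - l j) * (l j - m)" using bd[OF that] by simp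
      then show ?thesis by (simp add: algebra_simps power2_eq_square)
    qed
    moreover have "psd (\<Sum>j\<in>J. complex_of_real ((M + m) * l j - M * m - (l j)^2) *\<^sub>M Q j)"
      by (intro psd_sum psd_scale pQ) (erule nn, assumption)
    ultimately show ?thesis by (simp only:)
  qed
  show "psd (p - a ** a)"
  proof -
    have key: "qform (p - a ** a) x = (\<Sum>j\<in>J. qform (Q j) (complex_of_real (l j) *s x - a *v x))" for x
    proof -
      define y where "y = a *v x"
      have e2: "(\<Sum>j\<in>J. complex_of_real (l j) * hip x (Q j *v y)) = hip x (a *v y)"
        by (simp add: a_def sum_mv cmat_scale_mv hip_sum_right hip_smult_right)
      have e3: "(\<Sum>j\<in>J. complex_of_real (l j) * hip y (Q j *v x)) = hip y y"
        by (simp add: y_def a_def sum_mv cmat_scale_mv hip_sum_right hip_smult_right)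
      have e4: "(\<Sum>j\<in>J. hip y (Q j *v y)) = hip y y"
        using arg_cong[OF sQ, of "\<lambda>A. hip y (A *v y)"] by (simp add: sum_mv hip_sum_right)
      have e5: "hip x (a *v y) = hip y y" by (simp add: y_def herm_hip[OF ha])
      have "(\<Sum>j\<in>J. qform (Q j) (complex_of_real (l j) *s x - y)) =
          (\<Sum>j\<in>J. complex_of_real ((l j)^2) * qform (Q j) x)
          - (\<Sum>j\<in>J. complex_of_real (l j) * hip x (Q j *v y))
          - (\<Sum>j\<in>J. complex_of_real (l j) * hip y (Q j *v x))
          + (\<Sum>j\<in>J. hip y (Q j *v y))"
        by (simp add: qform_expand sum.distrib sum_subtractf)
      also have "\<dots> = qform p x - hip y y" by (simp add: qp e2 e3 e4 e5)
      also have "\<dots> = qform (p - a ** a) x" by (simp add: qform_diff qform_mult y_def herm_hip[OF ha])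
      finally show ?thesis by (simp add: y_def)
    qed
    show ?thesis unfolding psd_def key
      using pQ by (auto simp: Re_sum Im_sum psd_def intro!: sum_nonneg)
  qed
qed

lemma cmat_scale_zero: "0 *\<^sub>M A = 0"
  by (simp add: cmat_scale_def vec_eq_iff)

lemma cmat_scale_one: "1 *\<^sub>M A = A"
  by (simp add: cmat_scale_def vec_eq_iff)

lemma lin_zero: "clinear_map \<Phi> \<Longrightarrow> \<Phi> 0 = 0"
  unfolding clinear_map_def by (metis cmat_scale_zero)

lemma lin_sum: assumes "clinear_map \<Phi>" shows "\<Phi> (sum g S) = (\<Sum>j\<in>S. \<Phi> (g j))"
proof (induction S rule: infinite_finite_induct)
  case (infinite S) then show ?case using lin_zero[OF assms] by simp
next
  case empty then show ?case using lin_zero[OF assms] by simp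
next
  case (insert x F) then show ?case using assms by (simp add: clinear_map_def)
qed

lemma lin_scale: "clinear_map \<Phi> \<Longrightarrow> \<Phi> (c *\<^sub>M X) = c *\<^sub>M \<Phi> X"
  by (simp add: clinear_map_def)

lemma lin_add: "clinear_map \<Phi> \<Longrightarrow> \<Phi> (X + Y) = \<Phi> X + \<Phi> Y"
  by (simp add: clinear_map_def)

lemma psd_outer: "psd (outer u u)"
proof -
  have "psd (Dm {u} (\<lambda>_. 1))" by (rule Dm_psd) simp
  then show ?thesis by (simp add: Dm_def cmat_scale_one)
qed

lemma decomp:
  fixes X :: "nat \<Rightarrow> complex^'n::finite^'n" and \<Phi> :: "nat \<Rightarrow> complex^'n^'n \<Rightarrow> complex^'r::finite^'r"
  assumes hX: "\<And>i. i \<in> I \<Longrightarrow> hermitian (X i)" and fI: "finite I"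
    and lP: "\<And>i. i \<in> I \<Longrightarrow> clinear_map (\<Phi> i) \<and> positive_map (\<Phi> i)"
  shows "\<exists>(J :: (nat \<times> (complex^'n)) set) Q l. finite J \<and> (\<forall>j\<in>J. psd (Q j)) \<and>
     (\<Sum>i\<in>I. \<Phi> i (mat 1)) = (\<Sum>j\<in>J. Q j) \<and>
     (\<Sum>i\<in>I. \<Phi> i (X i)) = (\<Sum>j\<in>J. complex_of_real (l j) *\<^sub>M Q j) \<and>
     (\<Sum>i\<in>I. \<Phi> i (X i ** X i)) = (\<Sum>j\<in>J. complex_of_real ((l j)^2) *\<^sub>M Q j) \<and>
     (\<forall>j\<in>J. \<exists>i\<in>I. \<exists>u. hip u u = 1 \<and> l j = Re (qform (X i) u))"
proof -
  have "\<forall>i\<in>I. \<exists>U. ortho_eig (X i) U \<and> mat 1 = Dm U (\<lambda>_. 1) \<and> X i = Dm U (ev (X i))"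
    using spectral2 hX by blast
  from bchoice[OF this] obtain U where
    U: "\<forall>i\<in>I. ortho_eig (X i) (U i) \<and> mat 1 = Dm (U i) (\<lambda>_. 1) \<and> X i = Dm (U i) (ev (X i))"
    by (rule exE)
  define J where "J = Sigma I U"
  define Q where "Q = (\<lambda>(i, u). \<Phi> i (outer u u))"
  define l where "l = (\<lambda>(i, u). ev (X i) u)"
  have finU: "\<And>i. i \<in> I \<Longrightarrow> finite (U i)" using U by (auto simp: ortho_eig_def)
  have finJ: "finite J" unfolding J_def using fI finU by auto
  have gen: "(\<Sum>i\<in>I. \<Phi> i (Dm (U i) (f i))) = (\<Sum>j\<in>J. complex_of_real (case j of (i, u) \<Rightarrow> f i u) *\<^sub>M Q j)"
    for f :: "nat \<Rightarrow> complex^'n \<Rightarrow> real"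
  proof -
    have "(\<Sum>i\<in>I. \<Phi> i (Dm (U i) (f i))) =
        (\<Sum>i\<in>I. \<Sum>u\<in>U i. complex_of_real (f i u) *\<^sub>M \<Phi> i (outer u u))"
      by (rule sum.cong) (simp_all add: Dm_def lin_sum lin_scale lP)
    also have "\<dots> = (\<Sum>(i, u)\<in>J. complex_of_real (f i u) *\<^sub>M \<Phi> i (outer u u))"
      unfolding J_def by (rule sum.Sigma[OF fI]) (simp add: finU)
    also have "\<dots> = (\<Sum>j\<in>J. complex_of_real (case j of (i, u) \<Rightarrow> f i u) *\<^sub>M Q j)"
      by (rule sum.cong) (auto simp: Q_def)
    finally show ?thesis .
  qed
  have e1: "(\<Sum>i\<in>I. \<Phi> i (mat 1)) = (\<Sum>j\<in>J. Q j)"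
  proof -
    have "(\<Sum>i\<in>I. \<Phi> i (mat 1)) = (\<Sum>i\<in>I. \<Phi> i (Dm (U i) (\<lambda>_. 1)))"
      by (rule sum.cong) (use U in auto)
    also have "\<dots> = (\<Sum>j\<in>J. complex_of_real 1 *\<^sub>M Q j)"
      using gen[of "\<lambda>_ _. 1"] by (simp add: case_prod_beta)
    finally show ?thesis by (simp add: cmat_scale_one)
  qed
  have e2: "(\<Sum>i\<in>I. \<Phi> i (X i)) = (\<Sum>j\<in>J. complex_of_real (l j) *\<^sub>M Q j)"
  proof -
    have "(\<Sum>i\<in>I. \<Phi> i (X i)) = (\<Sum>i\<in>I. \<Phi> i (Dm (U i) (ev (X i))))"
      by (rule sum.cong) (use U in auto)
    also have "\<dots> = (\<Sum>j\<in>J. complex_of_real (l j) *\<^sub>M Q j)"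
      using gen[of "\<lambda>i. ev (X i)"] by (simp add: l_def)
    finally show ?thesis .
  qed
  have e3: "(\<Sum>i\<in>I. \<Phi> i (X i ** X i)) = (\<Sum>j\<in>J. complex_of_real ((l j)^2) *\<^sub>M Q j)"
  proof -
    have "(\<Sum>i\<in>I. \<Phi> i (X i ** X i)) = (\<Sum>i\<in>I. \<Phi> i (Dm (U i) (\<lambda>u. (ev (X i) u)^2)))"
    proof (rule sum.cong)
      fix i assume iI: "i \<in> I"
      then have "X i ** X i = Dm (U i) (\<lambda>u. ev (X i) u * ev (X i) u)"
        using U Dm_mult[of "X i" "U i"] by metis
      then show "\<Phi> i (X i ** X i) = \<Phi> i (Dm (U i) (\<lambda>u. (ev (X i) u)^2))"
        by (simp add: power2_eq_square)
    qed simp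
    also have "\<dots> = (\<Sum>j\<in>J. complex_of_real ((l j)^2) *\<^sub>M Q j)"
      using gen[of "\<lambda>i u. (ev (X i) u)^2"] by (simp add: l_def case_prod_beta)
    finally show ?thesis .
  qed
  have pQ: "\<forall>j\<in>J. psd (Q j)"
    using lP by (auto simp: J_def Q_def positive_map_def psd_outer)
  have ev: "\<forall>j\<in>J. \<exists>i\<in>I. \<exists>u. hip u u = 1 \<and> l j = Re (qform (X i) u)"
  proof
    fix j assume "j \<in> J"
    then obtain i u where j: "j = (i, u)" "i \<in> I" "u \<in> U i" by (auto simp: J_def)
    then have "hip u u = 1" using U by (auto simp: ortho_eig_def)
    then show "\<exists>i\<in>I. \<exists>u. hip u u = 1 \<and> l j = Re (qform (X i) u)"
      using j by (auto simp: l_def ev_def)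
  qed
  show ?thesis
    apply (rule exI[of _ J])
    apply (rule exI[of _ Q])
    apply (rule exI[of _ l])
    apply (intro conjI finJ pQ e1 e2 e3 ev)
    done
qed

lemma psd_of_hip: "(\<And>x. \<exists>z. qform K x = hip z z) \<Longrightarrow> psd K"
  unfolding psd_def by (metis hip_self Im_complex_of_real Re_complex_of_real zero_le_power2)

lemma psd_of_hip2: "(\<And>x. qform K x = hip (f x) (f x)) \<Longrightarrow> psd K"
  by (rule psd_of_hip) blast

lemma SQ1:
  assumes ha: "hermitian a"
  shows "psd ((complex_of_real c *\<^sub>M a) ** (complex_of_real c *\<^sub>M a)
           - (complex_of_real (2*c*d) *\<^sub>M a - mat (complex_of_real (d^2))))"
proof (rule psd_of_hip2[where f = "\<lambda>x. complex_of_real c *s (a *v x) - complex_of_real d *s x"])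
  fix x
  define y where "y = a *v x"
  have hyx: "hip y x = hip x y" by (simp add: y_def herm_hip[OF ha])
  let ?c = "complex_of_real c" and ?d = "complex_of_real d"
  have q1: "qform ((?c *\<^sub>M a) ** (?c *\<^sub>M a)) x = ?c * ?c * hip y y"
    by (simp add: qform_mult cmat_scale_mv mv_smult hip_smult_right herm_hip[OF ha] y_def)
  have q2: "qform a x = hip x y" by (simp add: qform_hip y_def)
  have "qform ((?c *\<^sub>M a) ** (?c *\<^sub>M a)
           - (complex_of_real (2*c*d) *\<^sub>M a - mat (complex_of_real (d^2)))) x
      = ?c * ?c * hip y y - (2 * ?c * ?d * hip x y - ?d * ?d * hip x x)"
    by (simp only: qform_diff qform_scale qform_mat q1 q2) (simp add: power2_eq_square)
  also have "\<dots> = hip (?c *s y - ?d *s x) (?c *s y - ?d *s x)"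
    by (simp add: hip_smult_left hip_smult_right hip_diff_left hip_diff_right hyx algebra_simps)
  finally show "qform ((?c *\<^sub>M a) ** (?c *\<^sub>M a)
           - (complex_of_real (2*c*d) *\<^sub>M a - mat (complex_of_real (d^2)))) x
      = hip (?c *s (a *v x) - ?d *s x) (?c *s (a *v x) - ?d *s x)" by (simp only: y_def)
qed

lemma herm_mat: "hermitian (mat (complex_of_real g))"
  by (rule herm_of_real) (simp add: qform_mat hip_self)

lemma SQ2:
  assumes ha: "hermitian a"
  shows "psd ((a + mat (complex_of_real g)) ** (a + mat (complex_of_real g))
           - (complex_of_real (2*(g+h)) *\<^sub>M a - mat (complex_of_real (h^2 - g^2))))"
proof (rule psd_of_hip2[where f = "\<lambda>x. a *v x - complex_of_real h *s x"])
  fix x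
  define y where "y = a *v x"
  let ?g = "complex_of_real g" and ?h = "complex_of_real h"
  have hyx: "hip y x = hip x y" by (simp add: y_def herm_hip[OF ha])
  have hb: "hermitian (a + mat ?g)" by (rule herm_add[OF ha herm_mat])
  have w: "(a + mat ?g) *v x = y + ?g *s x"
    by (simp add: y_def matrix_vector_mult_add_rdistrib mat_mv)
  have q1: "qform ((a + mat ?g) ** (a + mat ?g)) x = hip (y + ?g *s x) (y + ?g *s x)"
    by (simp only: qform_mult herm_hip[OF hb] w)
  have q2: "qform a x = hip x y" by (simp add: qform_hip y_def)
  have "qform ((a + mat ?g) ** (a + mat ?g)
           - (complex_of_real (2*(g+h)) *\<^sub>M a - mat (complex_of_real (h^2 - g^2)))) x
      = hip (y + ?g *s x) (y + ?g *s x) - (2 * (?g + ?h) * hip x y - (?h * ?h - ?g * ?g) * hip x x)"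
    by (simp only: qform_diff qform_scale qform_mat q1 q2) (simp add: power2_eq_square)
  also have "\<dots> = hip (y - ?h *s x) (y - ?h *s x)"
    by (simp add: hip_smult_left hip_smult_right hip_diff_left hip_diff_right hip_add_left
        hip_add_right hyx algebra_simps)
  finally show "qform ((a + mat ?g) ** (a + mat ?g)
           - (complex_of_real (2*(g+h)) *\<^sub>M a - mat (complex_of_real (h^2 - g^2)))) x
      = hip (a *v x - ?h *s x) (a *v x - ?h *s x)" by (simp only: y_def)
qed

lemma psd_mat: "0 \<le> g \<Longrightarrow> psd (mat (complex_of_real g))"
  by (simp add: psd_def qform_mat hip_self)

lemma loewner_bounds:
  assumes "hip u u = 1" "mat (complex_of_real m) \<le>\<^sub>L X" "X \<le>\<^sub>L mat (complex_of_real M)"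
  shows "m \<le> Re (qform X u) \<and> Re (qform X u) \<le> M"
  using assms unfolding loewner_le_def psd_def
  by (auto simp: qform_diff qform_mat dest!: spec[of _ u])

lemma decomp':
  fixes X :: "nat \<Rightarrow> complex^'n::finite^'n" and \<Phi> :: "nat \<Rightarrow> complex^'n^'n \<Rightarrow> complex^'r::finite^'r"
  assumes hX: "\<And>i. i \<in> I \<Longrightarrow> hermitian (X i)" and fI: "finite I"
    and lP: "\<And>i. i \<in> I \<Longrightarrow> clinear_map (\<Phi> i) \<and> positive_map (\<Phi> i)"
  obtains J :: "(nat \<times> (complex^'n)) set" and Q l where "finite J" "\<And>j. j \<in> J \<Longrightarrow> psd (Q j)"
     "(\<Sum>i\<in>I. \<Phi> i (mat 1)) = (\<Sum>j\<in>J. Q j)"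
     "(\<Sum>i\<in>I. \<Phi> i (X i)) = (\<Sum>j\<in>J. complex_of_real (l j) *\<^sub>M Q j)"
     "(\<Sum>i\<in>I. \<Phi> i (X i ** X i)) = (\<Sum>j\<in>J. complex_of_real ((l j)^2) *\<^sub>M Q j)"
     "\<And>j. j \<in> J \<Longrightarrow> \<exists>i\<in>I. \<exists>u. hip u u = 1 \<and> l j = Re (qform (X i) u)"
proof -
  have ex: "\<exists>(J :: (nat \<times> (complex^'n)) set) Q l. finite J \<and> (\<forall>j\<in>J. psd (Q j)) \<and>
     (\<Sum>i\<in>I. \<Phi> i (mat 1)) = (\<Sum>j\<in>J. Q j) \<and>
     (\<Sum>i\<in>I. \<Phi> i (X i)) = (\<Sum>j\<in>J. complex_of_real (l j) *\<^sub>M Q j) \<and>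
     (\<Sum>i\<in>I. \<Phi> i (X i ** X i)) = (\<Sum>j\<in>J. complex_of_real ((l j)^2) *\<^sub>M Q j) \<and>
     (\<forall>j\<in>J. \<exists>i\<in>I. \<exists>u. hip u u = 1 \<and> l j = Re (qform (X i) u))"
    by (rule decomp[where X=X and I=I and \<Phi>=\<Phi>]) (simp_all add: hX fI lP)
  from ex obtain J :: "(nat \<times> (complex^'n)) set" and Q l where
    d: "finite J \<and> (\<forall>j\<in>J. psd (Q j)) \<and>
     (\<Sum>i\<in>I. \<Phi> i (mat 1)) = (\<Sum>j\<in>J. Q j) \<and>
     (\<Sum>i\<in>I. \<Phi> i (X i)) = (\<Sum>j\<in>J. complex_of_real (l j) *\<^sub>M Q j) \<and>
     (\<Sum>i\<in>I. \<Phi> i (X i ** X i)) = (\<Sum>j\<in>J. complex_of_real ((l j)^2) *\<^sub>M Q j) \<and>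
     (\<forall>j\<in>J. \<exists>i\<in>I. \<exists>u. hip u u = 1 \<and> l j = Re (qform (X i) u))"
    by (elim exE) (erule that)
  note c2 = conjunct2[OF d]
  note c3 = conjunct2[OF c2]
  note c4 = conjunct2[OF c3]
  note c5 = conjunct2[OF c4]
  show ?thesis
  proof (rule that[of J Q l])
    show "finite J" by (rule conjunct1[OF d])
    show "\<And>j. j \<in> J \<Longrightarrow> psd (Q j)" using conjunct1[OF c2] by (rule bspec)
    show "(\<Sum>i\<in>I. \<Phi> i (mat 1)) = (\<Sum>j\<in>J. Q j)" by (rule conjunct1[OF c3])
    show "(\<Sum>i\<in>I. \<Phi> i (X i)) = (\<Sum>j\<in>J. complex_of_real (l j) *\<^sub>M Q j)" by (rule conjunct1[OF c4])
    show "(\<Sum>i\<in>I. \<Phi> i (X i ** X i)) = (\<Sum>j\<in>J. complex_of_real ((l j)^2) *\<^sub>M Q j)" by (rule conjunct1[OF c5])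
    show "\<And>j. j \<in> J \<Longrightarrow> \<exists>i\<in>I. \<exists>u. hip u u = 1 \<and> l j = Re (qform (X i) u)"
      using conjunct2[OF c5] by (rule bspec)
  qed
qed

declare loewner_trans[trans]

lemma cmat_scale_add: "c *\<^sub>M (X + Y) = c *\<^sub>M X + c *\<^sub>M Y"
  by (simp add: cmat_scale_def vec_eq_iff algebra_simps)

theorem mainTheorem8:
  fixes A B :: "nat \<Rightarrow> ('n::finite) cmat"
    and \<Phi> :: "nat \<Rightarrow> 'n cmat \<Rightarrow> ('r::finite) cmat"
    and k :: nat and m M :: real
  assumes "0 < m" and "m < M"
    and "\<And>i. i \<in> {1..k} \<Longrightarrow> hermitian (A i) \<and> hermitian (B i)"
    and "\<And>i. i \<in> {1..k} \<Longrightarrow> mat (complex_of_real m) \<le>\<^sub>L A i \<and> A i \<le>\<^sub>L mat (complex_of_real M)"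
    and "\<And>i. i \<in> {1..k} \<Longrightarrow> mat (complex_of_real m) \<le>\<^sub>L B i \<and> B i \<le>\<^sub>L mat (complex_of_real M)"
    and "\<And>i. i \<in> {1..k} \<Longrightarrow> clinear_map (\<Phi> i) \<and> positive_map (\<Phi> i)"
    and "(\<Sum>i=1..k. \<Phi> i (mat 1)) = mat 1"
  shows "(msqrt (\<Sum>i=1..k. \<Phi> i (A i ** A i)) + msqrt (\<Sum>i=1..k. \<Phi> i (B i ** B i))
           \<le>\<^sub>L complex_of_real ((M + m) / (2 * sqrt (M * m)))
                *\<^sub>M msqrt (\<Sum>i=1..k. \<Phi> i ((A i + B i) ** (A i + B i)))) \<and>
         (msqrt (\<Sum>i=1..k. \<Phi> i (A i ** A i)) + msqrt (\<Sum>i=1..k. \<Phi> i (B i ** B i))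
           \<le>\<^sub>L mat (complex_of_real ((M - m)^2 / (2 * (M + m))))
                + msqrt (\<Sum>i=1..k. \<Phi> i ((A i + B i) ** (A i + B i))))"
proof -
  let ?I = "{1..k}"
  have fI: "finite ?I" by simp
  have hA: "\<And>i. i \<in> ?I \<Longrightarrow> hermitian (A i)" using assms(3) by blast
  have hB: "\<And>i. i \<in> ?I \<Longrightarrow> hermitian (B i)" using assms(3) by blast
  have hC: "\<And>i. i \<in> ?I \<Longrightarrow> hermitian (A i + B i)" using hA hB by (simp add: herm_add)
  have lP: "\<And>i. i \<in> ?I \<Longrightarrow> clinear_map (\<Phi> i) \<and> positive_map (\<Phi> i)" using assms(6) by blast
  define a where "a = (\<Sum>i=1..k. \<Phi> i (A i))"
  define b where "b = (\<Sum>i=1..k. \<Phi> i (B i))"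
  define s where "s = (\<Sum>i=1..k. \<Phi> i (A i + B i))"
  define PA where "PA = (\<Sum>i=1..k. \<Phi> i (A i ** A i))"
  define PB where "PB = (\<Sum>i=1..k. \<Phi> i (B i ** B i))"
  define R where "R = (\<Sum>i=1..k. \<Phi> i ((A i + B i) ** (A i + B i)))"
  have sab: "s = a + b"
  proof -
    have "s = (\<Sum>i=1..k. \<Phi> i (A i) + \<Phi> i (B i))"
      unfolding s_def by (rule sum.cong) (simp_all add: lin_add lP)
    then show ?thesis by (simp add: sum.distrib a_def b_def)
  qed
  obtain JA :: "(nat \<times> (complex^'n)) set" and QA lA where
    fJA: "finite JA" and pQA: "\<And>j. j \<in> JA \<Longrightarrow> psd (QA j)"
    and s1A: "(\<Sum>i\<in>?I. \<Phi> i (mat 1)) = (\<Sum>j\<in>JA. QA j)"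
    and eA1: "(\<Sum>i\<in>?I. \<Phi> i (A i)) = (\<Sum>j\<in>JA. complex_of_real (lA j) *\<^sub>M QA j)"
    and eA2: "(\<Sum>i\<in>?I. \<Phi> i (A i ** A i)) = (\<Sum>j\<in>JA. complex_of_real ((lA j)^2) *\<^sub>M QA j)"
    and evA: "\<And>j. j \<in> JA \<Longrightarrow> \<exists>i\<in>?I. \<exists>u. hip u u = 1 \<and> lA j = Re (qform (A i) u)"
    by (rule decomp'[where X=A and I="?I" and \<Phi>=\<Phi>, OF _ fI]) (rule hA, assumption, rule lP, assumption, rule that, assumption+)
  have sQA: "(\<Sum>j\<in>JA. QA j) = mat 1" using s1A assms(7) by simp
  have bdA: "m \<le> lA j \<and> lA j \<le> M" if jJ: "j \<in> JA" for j
  proof -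
    obtain i u where "i \<in> ?I" "hip u u = 1" "lA j = Re (qform (A i) u)" using evA[OF jJ] by blast
    then show ?thesis using loewner_bounds[of u m "A i" M] assms(4) by simp
  qed
  have haA: "hermitian a" using G0(1)[where l=lA, OF fJA pQA sQA] eA1 by (simp add: a_def)
  have pPA: "psd PA" using G0(2)[where l=lA, OF fJA pQA sQA] eA2 by (simp add: PA_def)
  have paA: "psd a" using G0(4)[where l=lA, OF fJA pQA sQA] eA1 bdA assms(1)
    by (simp add: a_def) (meson less_le_trans less_imp_le)
  have bA: "psd (complex_of_real (M + m) *\<^sub>M a - mat (complex_of_real (M * m)) - PA)"
    using G0(5)[where l=lA and m=m and M=M, OF fJA pQA sQA] eA1 eA2 bdA by (simp add: a_def PA_def)
  obtain JB :: "(nat \<times> (complex^'n)) set" and QB lB where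
    fJB: "finite JB" and pQB: "\<And>j. j \<in> JB \<Longrightarrow> psd (QB j)"
    and s1B: "(\<Sum>i\<in>?I. \<Phi> i (mat 1)) = (\<Sum>j\<in>JB. QB j)"
    and eB1: "(\<Sum>i\<in>?I. \<Phi> i (B i)) = (\<Sum>j\<in>JB. complex_of_real (lB j) *\<^sub>M QB j)"
    and eB2: "(\<Sum>i\<in>?I. \<Phi> i (B i ** B i)) = (\<Sum>j\<in>JB. complex_of_real ((lB j)^2) *\<^sub>M QB j)"
    and evB: "\<And>j. j \<in> JB \<Longrightarrow> \<exists>i\<in>?I. \<exists>u. hip u u = 1 \<and> lB j = Re (qform (B i) u)"
    by (rule decomp'[where X=B and I="?I" and \<Phi>=\<Phi>, OF _ fI]) (rule hB, assumption, rule lP, assumption, rule that, assumption+)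
  have sQB: "(\<Sum>j\<in>JB. QB j) = mat 1" using s1B assms(7) by simp
  have bdB: "m \<le> lB j \<and> lB j \<le> M" if jJ: "j \<in> JB" for j
  proof -
    obtain i u where "i \<in> ?I" "hip u u = 1" "lB j = Re (qform (B i) u)" using evB[OF jJ] by blast
    then show ?thesis using loewner_bounds[of u m "B i" M] assms(5) by simp
  qed
  have haB: "hermitian b" using G0(1)[where l=lB, OF fJB pQB sQB] eB1 by (simp add: b_def)
  have pPB: "psd PB" using G0(2)[where l=lB, OF fJB pQB sQB] eB2 by (simp add: PB_def)
  have paB: "psd b" using G0(4)[where l=lB, OF fJB pQB sQB] eB1 bdB assms(1)
    by (simp add: b_def) (meson less_le_trans less_imp_le)
  have bB: "psd (complex_of_real (M + m) *\<^sub>M b - mat (complex_of_real (M * m)) - PB)"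
    using G0(5)[where l=lB and m=m and M=M, OF fJB pQB sQB] eB1 eB2 bdB by (simp add: b_def PB_def)
  obtain JC :: "(nat \<times> (complex^'n)) set" and QC lC where
    fJC: "finite JC" and pQC: "\<And>j. j \<in> JC \<Longrightarrow> psd (QC j)"
    and s1C: "(\<Sum>i\<in>?I. \<Phi> i (mat 1)) = (\<Sum>j\<in>JC. QC j)"
    and eC1: "(\<Sum>i\<in>?I. \<Phi> i (A i + B i)) = (\<Sum>j\<in>JC. complex_of_real (lC j) *\<^sub>M QC j)"
    and eC2: "(\<Sum>i\<in>?I. \<Phi> i ((A i + B i) ** (A i + B i))) = (\<Sum>j\<in>JC. complex_of_real ((lC j)^2) *\<^sub>M QC j)"
    by (rule decomp'[where X="\<lambda>i. A i + B i" and I="?I" and \<Phi>=\<Phi>, OF _ fI]) (rule hC, assumption, rule lP, assumption, rule that, assumption+)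
  have sQC: "(\<Sum>j\<in>JC. QC j) = mat 1" using s1C assms(7) by simp
  have pR: "psd R" using G0(2)[where l=lC, OF fJC pQC sQC] eC2 by (simp add: R_def)
  have kad: "psd (R - s ** s)" using G0(3)[where l=lC, OF fJC pQC sQC] eC1 eC2 by (simp add: R_def s_def)
  have ps: "psd s" using psd_add[OF paA paB] sab by simp
  have sqR: "psd (msqrt R) \<and> msqrt R ** msqrt R = R" by (rule msqrt_char[OF pR])
  have sR: "s \<le>\<^sub>L msqrt R"
    by (rule sq_mono[OF ps conjunct1[OF sqR]]) (simp add: loewner_le_def conjunct2[OF sqR] kad)
  define c where "c = (M + m) / (2 * sqrt (M * m))"
  define d where "d = sqrt (M * m)"
  have Mm: "0 < M * m" using assms(1,2) by simp
  have cd1: "2 * c * d = M + m" using Mm assms(1,2) by (simp add: c_def d_def)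
  have cd2: "d^2 = M * m" using Mm by (simp add: d_def)
  have c0: "0 \<le> c" using assms(1,2) by (simp add: c_def)
  have upA: "msqrt PA \<le>\<^sub>L complex_of_real c *\<^sub>M a"
  proof (rule sqrt_le[OF pPA psd_scale[OF c0 paA]])
    have "PA \<le>\<^sub>L complex_of_real (M + m) *\<^sub>M a - mat (complex_of_real (M * m))"
      using bA by (simp add: loewner_le_def)
    also have "complex_of_real (M + m) *\<^sub>M a - mat (complex_of_real (M * m)) \<le>\<^sub>L
        (complex_of_real c *\<^sub>M a) ** (complex_of_real c *\<^sub>M a)"
      using SQ1[OF haA, of c d] unfolding cd1 cd2 loewner_le_def .
    finally show "PA \<le>\<^sub>L (complex_of_real c *\<^sub>M a) ** (complex_of_real c *\<^sub>M a)" .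
  qed
  have upB: "msqrt PB \<le>\<^sub>L complex_of_real c *\<^sub>M b"
  proof (rule sqrt_le[OF pPB psd_scale[OF c0 paB]])
    have "PB \<le>\<^sub>L complex_of_real (M + m) *\<^sub>M b - mat (complex_of_real (M * m))"
      using bB by (simp add: loewner_le_def)
    also have "complex_of_real (M + m) *\<^sub>M b - mat (complex_of_real (M * m)) \<le>\<^sub>L
        (complex_of_real c *\<^sub>M b) ** (complex_of_real c *\<^sub>M b)"
      using SQ1[OF haB, of c d] unfolding cd1 cd2 loewner_le_def .
    finally show "PB \<le>\<^sub>L (complex_of_real c *\<^sub>M b) ** (complex_of_real c *\<^sub>M b)" .
  qed
  have ineq1: "msqrt PA + msqrt PB \<le>\<^sub>L complex_of_real c *\<^sub>M msqrt R"
  proof -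
    have "msqrt PA + msqrt PB \<le>\<^sub>L complex_of_real c *\<^sub>M a + complex_of_real c *\<^sub>M b"
      by (rule loewner_add[OF upA upB])
    also have "complex_of_real c *\<^sub>M a + complex_of_real c *\<^sub>M b = complex_of_real c *\<^sub>M s"
      by (simp add: sab cmat_scale_add)
    also have "complex_of_real c *\<^sub>M s \<le>\<^sub>L complex_of_real c *\<^sub>M msqrt R"
      by (rule loewner_scale[OF c0 sR])
    finally show ?thesis .
  qed
  define g where "g = (M - m)^2 / (4 * (M + m))"
  define h where "h = (M + m) / 2 - g"
  have gh1: "2 * (g + h) = M + m" by (simp add: h_def)
  have gh2: "h^2 - g^2 = M * m"
  proof -
    have Mp: "0 < M + m" using assms(1,2) by simp
    have g4: "4 * (M + m) * g = (M - m)^2" using Mp by (simp add: g_def)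
    have "h^2 - g^2 = (h - g) * (h + g)" by (simp add: power2_eq_square algebra_simps)
    also have "\<dots> = ((M + m) / 2 - 2 * g) * ((M + m) / 2)" by (simp add: h_def)
    also have "\<dots> = ((M + m)^2 - 4 * (M + m) * g) / 4" by (simp add: power2_eq_square field_simps)
    also have "\<dots> = ((M + m)^2 - (M - m)^2) / 4" by (simp only: g4)
    also have "\<dots> = M * m" by (simp add: power2_eq_square algebra_simps)
    finally show ?thesis .
  qed
  have g0: "0 \<le> g" using assms(1,2) by (simp add: g_def)
  have upA2: "msqrt PA \<le>\<^sub>L a + mat (complex_of_real g)"
  proof (rule sqrt_le[OF pPA psd_add[OF paA psd_mat[OF g0]]])
    have "PA \<le>\<^sub>L complex_of_real (M + m) *\<^sub>M a - mat (complex_of_real (M * m))"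
      using bA by (simp add: loewner_le_def)
    also have "complex_of_real (M + m) *\<^sub>M a - mat (complex_of_real (M * m)) \<le>\<^sub>L
        (a + mat (complex_of_real g)) ** (a + mat (complex_of_real g))"
      using SQ2[OF haA, of g h] unfolding gh1 gh2 loewner_le_def .
    finally show "PA \<le>\<^sub>L (a + mat (complex_of_real g)) ** (a + mat (complex_of_real g))" .
  qed
  have upB2: "msqrt PB \<le>\<^sub>L b + mat (complex_of_real g)"
  proof (rule sqrt_le[OF pPB psd_add[OF paB psd_mat[OF g0]]])
    have "PB \<le>\<^sub>L complex_of_real (M + m) *\<^sub>M b - mat (complex_of_real (M * m))"
      using bB by (simp add: loewner_le_def)
    also have "complex_of_real (M + m) *\<^sub>M b - mat (complex_of_real (M * m)) \<le>\<^sub>L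
        (b + mat (complex_of_real g)) ** (b + mat (complex_of_real g))"
      using SQ2[OF haB, of g h] unfolding gh1 gh2 loewner_le_def .
    finally show "PB \<le>\<^sub>L (b + mat (complex_of_real g)) ** (b + mat (complex_of_real g))" .
  qed
  have ineq2: "msqrt PA + msqrt PB \<le>\<^sub>L mat (complex_of_real ((M - m)^2 / (2 * (M + m)))) + msqrt R"
  proof -
    have gg: "mat (complex_of_real g) + mat (complex_of_real g) =
        (mat (complex_of_real ((M - m)^2 / (2 * (M + m)))) :: complex^'r^'r)"
    proof -
      have Mp: "0 < M + m" using assms(1,2) by simp
      have g2: "g = ((M - m)^2 / (2 * (M + m))) / 2" by (simp add: g_def divide_divide_eq_left)
      have gd: "g + g = (M - m)^2 / (2 * (M + m))" unfolding g2[symmetric] using field_sum_of_halves[of "(M - m)^2 / (2 * (M + m))"] g2 by simp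
      have "mat (complex_of_real g) + mat (complex_of_real g) = (mat (complex_of_real (g + g)) :: complex^'r^'r)"
        by (simp add: mat_def vec_eq_iff)
      then show ?thesis by (simp only: gd)
    qed
    have "msqrt PA + msqrt PB \<le>\<^sub>L (a + mat (complex_of_real g)) + (b + mat (complex_of_real g))"
      by (rule loewner_add[OF upA2 upB2])
    also have "(a + mat (complex_of_real g)) + (b + mat (complex_of_real g)) =
        (mat (complex_of_real g) + mat (complex_of_real g)) + s"
      by (simp add: sab algebra_simps)
    also have "\<dots> = mat (complex_of_real ((M - m)^2 / (2 * (M + m)))) + s" by (simp only: gg)
    also have "\<dots> \<le>\<^sub>L mat (complex_of_real ((M - m)^2 / (2 * (M + m)))) + msqrt R"
      by (rule loewner_add[OF loewner_refl sR])
    finally show ?thesis .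
  qed
  show ?thesis using ineq1 ineq2 unfolding c_def PA_def PB_def R_def by (rule conjI)
qed

end
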